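(* Let $(\mathcal{H},d)$ be a Hadamard space, $X_1,\dots,X_n\in\mathcal{H}$, $C_n=\mathrm{conv}\{X_1,\dots,X_n\}$, and $y\in\mathbb{R}^n$. Then the domain of $\bar h_y$, $\{x\in\mathcal{H}:\bar h_y(x)>-\infty\}$, equals $\mathrm{cl}(C_n)$.
   Context: A Hadamard space is a complete CAT(0) geodesic metric space, with unique geodesics; $\mathcal{H}\times\mathbb{R}$ is again a Hadamard space. A set is convex if it contains the geodesic between any two of its points; $\mathrm{conv}$ denotes convex hull and $\mathrm{cl}$ closure. A function $g:\mathcal{H}\to[-\infty,\infty]$ is concave if its hypograph $\mathrm{hypo}\,g=\{(x,\mu):\mu\le g(x)\}$ is convex in $\mathcal{H}\times\mathbb{R}$. For $y=(y_1,\dots,y_n)\in\mathbb{R}^n$, define $f_y(x)=y_i$ if $x=X_i$ and $f_y(x)=-\infty$ otherwise. The upper-semicontinuous concave hull $\bar h_y$ of $f_y$ is the least upper-semicontinuous concave function $g$ with $g\ge f_y$ (i.e. $g(X_i)\ge y_i$ for all $i$); equivalently, $\mathrm{hypo}\,\bar h_y=\mathrm{cl}(\mathrm{conv}(\mathrm{hypo}\,f_y))$. *)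

theory Defs
  imports "HOL-Analysis.Analysis"
begin

definition geodesic :: "('a::metric_space \<Rightarrow> 'a \<Rightarrow> (real \<Rightarrow> 'a) \<Rightarrow> bool)" where
  "geodesic x y \<gamma> \<longleftrightarrow> \<gamma> 0 = x \<and> \<gamma> 1 = y \<and>
     (\<forall>s\<in>{0..1}. \<forall>t\<in>{0..1}. dist (\<gamma> s) (\<gamma> t) = \<bar>s - t\<bar> * dist x y)"

definition hadamard_space :: "'a::metric_space itself \<Rightarrow> bool" where
  "hadamard_space TYPE('a) \<longleftrightarrow>
     complete (UNIV :: 'a set) \<and>
     (\<forall>x y :: 'a. \<exists>\<gamma>. geodesic x y \<gamma>) \<and>
     (\<forall>x y :: 'a. \<forall>\<gamma>1 \<gamma>2. geodesic x y \<gamma>1 \<longrightarrow> geodesic x y \<gamma>2 \<longrightarrow> (\<forall>t\<in>{0..1}. \<gamma>1 t = \<gamma>2 t)) \<and>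
     (\<forall>x y z :: 'a. \<forall>\<gamma>. geodesic x y \<gamma> \<longrightarrow> (\<forall>t\<in>{0..1}.
        (dist z (\<gamma> t))\<^sup>2 \<le> (1 - t) * (dist z x)\<^sup>2 + t * (dist z y)\<^sup>2 - t * (1 - t) * (dist x y)\<^sup>2))"

definition gconvex :: "'a::metric_space set \<Rightarrow> bool" where
  "gconvex S \<longleftrightarrow> (\<forall>x\<in>S. \<forall>y\<in>S. \<forall>\<gamma>. geodesic x y \<gamma> \<longrightarrow> (\<forall>t\<in>{0..1}. \<gamma> t \<in> S))"

text \<open>Hypograph in H \<times> R (product metric sqrt(d^2 + |.|^2)).\<close>
definition hypo :: "('a \<Rightarrow> ereal) \<Rightarrow> ('a \<times> real) set" where
  "hypo g = {(x, \<mu>). ereal \<mu> \<le> g x}"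

definition gconcave :: "('a::metric_space \<Rightarrow> ereal) \<Rightarrow> bool" where
  "gconcave g \<longleftrightarrow> gconvex (hypo g)"

definition usc :: "('a::topological_space \<Rightarrow> ereal) \<Rightarrow> bool" where
  "usc g \<longleftrightarrow> (\<forall>x c. g x < c \<longrightarrow> eventually (\<lambda>z. g z < c) (at x))"

definition fy :: "nat \<Rightarrow> (nat \<Rightarrow> 'a) \<Rightarrow> (nat \<Rightarrow> real) \<Rightarrow> 'a \<Rightarrow> ereal" where
  "fy n X y x = (if \<exists>i<n. X i = x then ereal (Max {y i | i. i < n \<and> X i = x}) else -\<infinity>)"

definition usc_concave_hull :: "nat \<Rightarrow> (nat \<Rightarrow> 'a::metric_space) \<Rightarrow> (nat \<Rightarrow> real) \<Rightarrow> 'a \<Rightarrow> ereal" where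
  "usc_concave_hull n X y x =
     (INF g \<in> {g. usc g \<and> gconcave g \<and> (\<forall>z. g z \<ge> fy n X y z)}. g x)"

end

theory Submission imports Defs begin

lemma real_key:
  fixes a b d u w t :: real
  assumes "0\<le>a" "0\<le>b" "0\<le>d" "d \<le> a+b" "0\<le>t" "t\<le>1"
    and e1: "a\<^sup>2+u\<^sup>2 = t\<^sup>2*(d\<^sup>2+(u+w)\<^sup>2)" and e2: "b\<^sup>2+w\<^sup>2 = (1-t)\<^sup>2*(d\<^sup>2+(u+w)\<^sup>2)"
  shows "a = t*d \<and> b = (1-t)*d \<and> u = t*(u+w)"
proof -
  define D where "D = d\<^sup>2+(u+w)\<^sup>2"
  define c where "c = t*(1-t)*D"
  have e1': "a\<^sup>2+u\<^sup>2 = t\<^sup>2*D" using e1 D_def by simp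
  have e2': "b\<^sup>2+w\<^sup>2 = (1-t)\<^sup>2*D" using e2 D_def by simp
  have D0: "D \<ge> 0" unfolding D_def by simp
  have c0: "c \<ge> 0" unfolding c_def using assms D0 by simp
  have sq: "d\<^sup>2 \<le> (a+b)\<^sup>2" using assms by (simp add: power_mono)
  have exp: "(a+b)\<^sup>2 + (u+w)\<^sup>2 = (a\<^sup>2+u\<^sup>2) + (b\<^sup>2+w\<^sup>2) + 2*(a*b+u*w)"
    by (simp add: power2_eq_square algebra_simps)
  have tt: "t\<^sup>2*D + (1-t)\<^sup>2*D + 2*c = D" unfolding c_def by (simp add: power2_eq_square algebra_simps)
  have q1: "D \<le> (a\<^sup>2+u\<^sup>2)+(b\<^sup>2+w\<^sup>2)+2*(a*b+u*w)" using sq exp D_def by (smt (verit))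
  have q2: "(a\<^sup>2+u\<^sup>2)+(b\<^sup>2+w\<^sup>2) = D - 2*c" using e1' e2' tt by (smt (verit))
  have h1: "a*b+u*w \<ge> c" using q1 q2 by (smt (verit))
  have cs: "(a*b+u*w)\<^sup>2 + (a*w-u*b)\<^sup>2 = (a\<^sup>2+u\<^sup>2)*(b\<^sup>2+w\<^sup>2)"
    by (simp add: power2_eq_square algebra_simps)
  have "(a\<^sup>2+u\<^sup>2)*(b\<^sup>2+w\<^sup>2) = c\<^sup>2" unfolding c_def e1' e2'
    by (simp only: power2_eq_square; algebra)
  hence "(a*b+u*w)\<^sup>2 \<le> c\<^sup>2" using cs by (smt (verit) zero_le_power2)
  hence "a*b+u*w \<le> c" using c0 by (meson abs_le_square_iff abs_ge_self order_trans power2_le_imp_le)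
  hence s: "a*b+u*w = c" using h1 by linarith
  have z: "((1-t)*a - t*b)\<^sup>2 + ((1-t)*u - t*w)\<^sup>2 = (1-t)\<^sup>2*(a\<^sup>2+u\<^sup>2) + t\<^sup>2*(b\<^sup>2+w\<^sup>2) - 2*t*(1-t)*(a*b+u*w)"
    by (simp add: power2_eq_square algebra_simps)
  have "(1-t)\<^sup>2*(a\<^sup>2+u\<^sup>2) + t\<^sup>2*(b\<^sup>2+w\<^sup>2) - 2*t*(1-t)*(a*b+u*w) = 0"
    unfolding s e1' e2' c_def by (simp only: power2_eq_square; algebra)
  hence "((1-t)*a - t*b)\<^sup>2 + ((1-t)*u - t*w)\<^sup>2 = 0" using z by simp
  hence p1: "(1-t)*a = t*b" and p2: "(1-t)*u = t*w"
    using sum_power2_eq_zero_iff by (smt (verit))+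
  have "(a+b)\<^sup>2 = d\<^sup>2" using exp q2 s D_def by (smt (verit))
  hence ab: "a+b = d" using assms by (smt (verit) power2_le_imp_le)
  show ?thesis using p1 p2 ab by (auto simp: algebra_simps)
qed

lemma real_cont:
  fixes A B d d' t \<delta> :: real
  assumes "0\<le>t" "t\<le>1" "0\<le>d" "0\<le>\<delta>" "A = t*d" "0\<le>B" "B \<le> (1-t)*d+\<delta>" "0\<le>d'" "d-\<delta> \<le> d'"
  shows "(1-t)*A\<^sup>2 + t*B\<^sup>2 - t*(1-t)*d'\<^sup>2 \<le> 5*\<delta>*(d+\<delta>)"
proof -
  have B2: "B\<^sup>2 \<le> ((1-t)*d+\<delta>)\<^sup>2" using assms by (simp add: power_mono)
  have tB: "t*B\<^sup>2 \<le> t*((1-t)*d+\<delta>)\<^sup>2" using B2 assms by (simp add: mult_left_mono)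
  have t1: "t*(1-t) \<le> 1" "t*t \<le> 1" "0 \<le> t*(1-t)" "1-t \<le> 1" "0 \<le> 1-t" using assms by (auto simp: mult_le_one)
  show ?thesis
  proof (cases "d \<ge> \<delta>")
    case True
    hence "(d-\<delta>)\<^sup>2 \<le> d'\<^sup>2" using assms by (simp add: power_mono)
    hence X: "t*(1-t)*(d-\<delta>)\<^sup>2 \<le> t*(1-t)*d'\<^sup>2" using t1 by (simp add: mult_left_mono)
    have Y: "(1-t)*A\<^sup>2 + t*((1-t)*d+\<delta>)\<^sup>2 - t*(1-t)*(d-\<delta>)\<^sup>2 = 4*(t*(1-t))*(d*\<delta>) + (t*t)*(\<delta>*\<delta>)"
      unfolding assms(5) by (simp add: power2_eq_square algebra_simps)
    have Z1: "4*(t*(1-t))*(d*\<delta>) \<le> 4*(d*\<delta>)" using t1 assms mult_left_le_one_le[of "d*\<delta>" "t*(1-t)"] by simp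
    have Z2: "(t*t)*(\<delta>*\<delta>) \<le> \<delta>*\<delta>" using t1 assms by (simp add: mult_left_le_one_le)
    have Z3: "4*(d*\<delta>) + \<delta>*\<delta> \<le> 5*\<delta>*(d+\<delta>)" using assms by (simp add: algebra_simps)
    show ?thesis using X Y Z1 Z2 Z3 tB by linarith
  next
    case False
    have W0: "t*(1-t)*d'\<^sup>2 \<ge> 0" using t1 by simp
    have W1: "(1-t)*A\<^sup>2 \<le> \<delta>*d"
    proof -
      have "A \<le> d" "0 \<le> A" using assms t1 by (auto simp: mult_left_le_one_le)
      hence "A\<^sup>2 \<le> d*d" by (simp add: power2_eq_square mult_mono)
      moreover have "(1-t)*A\<^sup>2 \<le> A\<^sup>2" using t1 by (simp add: mult_left_le_one_le)
      moreover have "d*d \<le> \<delta>*d" using False assms by (simp add: mult_right_mono)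
      ultimately show ?thesis by linarith
    qed
    have W2: "t*((1-t)*d+\<delta>)\<^sup>2 \<le> (d+\<delta>)\<^sup>2"
    proof -
      have "(1-t)*d+\<delta> \<le> d+\<delta>" "0 \<le> (1-t)*d+\<delta>" using t1 assms by (auto simp: mult_left_le_one_le)
      hence "((1-t)*d+\<delta>)\<^sup>2 \<le> (d+\<delta>)\<^sup>2" by (simp add: power_mono)
      moreover have "t*((1-t)*d+\<delta>)\<^sup>2 \<le> ((1-t)*d+\<delta>)\<^sup>2" using assms by (simp add: mult_left_le_one_le)
      ultimately show ?thesis by linarith
    qed
    have W3: "(d+\<delta>)\<^sup>2 \<le> 2*\<delta>*(d+\<delta>)" using False assms by (simp add: power2_eq_square mult_right_mono)
    have W4: "\<delta>*d \<le> 3*\<delta>*(d+\<delta>)" using assms by (simp add: algebra_simps)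
    show ?thesis using W0 W1 W2 W3 W4 tB by linarith
  qed
qed

lemma geo_rev: "geodesic x y \<gamma> \<Longrightarrow> geodesic y x (\<lambda>s. \<gamma> (1-s))"
  unfolding geodesic_def
proof (intro conjI ballI)
  fix s t :: real assume g: "\<gamma> 0 = x \<and> \<gamma> 1 = y \<and> (\<forall>s\<in>{0..1}. \<forall>t\<in>{0..1}. dist (\<gamma> s) (\<gamma> t) = \<bar>s - t\<bar> * dist x y)"
    and st: "s \<in> {0..1}" "t \<in> {0..1}"
  have "dist (\<gamma> (1-s)) (\<gamma> (1-t)) = \<bar>(1-s) - (1-t)\<bar> * dist x y" using g st by auto
  thus "dist (\<gamma> (1-s)) (\<gamma> (1-t)) = \<bar>s - t\<bar> * dist y x" by (simp add: dist_commute abs_minus_commute)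
qed auto

lemma geo_dist:
  assumes "geodesic x y \<gamma>" "t \<in> {0..1}"
  shows "dist x (\<gamma> t) = t * dist x y" "dist (\<gamma> t) y = (1-t) * dist x y"
proof -
  have g: "\<gamma> 0 = x" "\<gamma> 1 = y" "\<And>s t. s\<in>{0..1} \<Longrightarrow> t\<in>{0..1} \<Longrightarrow> dist (\<gamma> s) (\<gamma> t) = \<bar>s - t\<bar> * dist x y"
    using assms(1) unfolding geodesic_def by auto
  show "dist x (\<gamma> t) = t * dist x y" using g(3)[of 0 t] g(1) assms(2) by auto
  show "dist (\<gamma> t) y = (1-t) * dist x y" using g(3)[of t 1] g(2) assms(2) by auto
qed

lemma had_CN:
  assumes "hadamard_space TYPE('a::metric_space)" "geodesic (x::'a) y \<gamma>" "t\<in>{0..1}"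
  shows "(dist z (\<gamma> t))\<^sup>2 \<le> (1 - t) * (dist z x)\<^sup>2 + t * (dist z y)\<^sup>2 - t * (1 - t) * (dist x y)\<^sup>2"
  using assms unfolding hadamard_space_def by blast

lemma had_ex:
  assumes "hadamard_space TYPE('a::metric_space)"
  shows "\<exists>\<gamma>. geodesic (x::'a) y \<gamma>"
  using assms unfolding hadamard_space_def by blast

lemma had_mid:
  assumes H: "hadamard_space TYPE('a::metric_space)" and g: "geodesic (a::'a) b \<sigma>" and t: "t\<in>{0..1}"
    and d1: "dist a z = t * dist a b" and d2: "dist z b = (1-t) * dist a b"
  shows "z = \<sigma> t"
proof -
  have "(dist z (\<sigma> t))\<^sup>2 \<le> (1 - t) * (dist z a)\<^sup>2 + t * (dist z b)\<^sup>2 - t * (1 - t) * (dist a b)\<^sup>2"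
    using had_CN[OF H g t] .
  also have "\<dots> = 0"
  proof -
    have d1': "dist z a = t * dist a b" using d1 by (simp add: dist_commute)
    show ?thesis unfolding d1' d2 by (simp only: power2_eq_square; algebra)
  qed
  finally show ?thesis by simp
qed

lemma had_cont:
  assumes H: "hadamard_space TYPE('a::metric_space)" and g: "geodesic (a::'a) b \<sigma>"
    and g': "geodesic a b' \<sigma>'" and t: "t\<in>{0..1}"
  shows "(dist (\<sigma> t) (\<sigma>' t))\<^sup>2 \<le> 5 * dist b b' * (dist a b + dist b b')"
proof -
  have "(dist (\<sigma> t) (\<sigma>' t))\<^sup>2 \<le> (1 - t) * (dist (\<sigma> t) a)\<^sup>2 + t * (dist (\<sigma> t) b')\<^sup>2 - t * (1 - t) * (dist a b')\<^sup>2"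
    using had_CN[OF H g' t] .
  also have "\<dots> \<le> 5 * dist b b' * (dist a b + dist b b')"
  proof (rule real_cont)
    show "dist (\<sigma> t) a = t * dist a b" using geo_dist[OF g t] by (simp add: dist_commute)
    show "dist (\<sigma> t) b' \<le> (1-t) * dist a b + dist b b'"
      using geo_dist(2)[OF g t] dist_triangle[of "\<sigma> t" b' b] by linarith
    show "dist a b - dist b b' \<le> dist a b'" using dist_triangle[of a b b'] dist_commute[of b' b] by linarith
  qed (use t in auto)
  finally show ?thesis .
qed

lemma approx_lemma:
  assumes H: "hadamard_space TYPE('a::metric_space)" and g: "geodesic (a::'a) b \<sigma>" and t: "t\<in>{0..1}"
    and T: "\<And>e. e>0 \<Longrightarrow> \<exists>b'. dist b' b < e \<and> (\<exists>\<sigma>'. geodesic a b' \<sigma>' \<and> \<sigma>' t \<in> C)"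
  shows "\<sigma> t \<in> closure C"
  unfolding closure_approachable
proof (intro allI impI)
  fix e :: real assume e: "e > 0"
  define \<delta> where "\<delta> = min 1 (e\<^sup>2 / (10 * (dist a b + 1)))"
  have q: "0 < 10*(dist a b + 1)" using zero_le_dist[of a b] by (intro mult_pos_pos add_nonneg_pos) auto
  have p: "0 < e\<^sup>2/(10*(dist a b + 1))" using e q by simp
  have \<delta>0: "\<delta> > 0" unfolding \<delta>_def using p by simp
  then obtain b' \<sigma>' where b': "dist b' b < \<delta>" "geodesic a b' \<sigma>'" "\<sigma>' t \<in> C"
    using T by blast
  have "(dist (\<sigma> t) (\<sigma>' t))\<^sup>2 \<le> 5 * dist b b' * (dist a b + dist b b')"
    using had_cont[OF H g b'(2) t] .
  also have "\<dots> \<le> 5 * \<delta> * (dist a b + 1)"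
  proof -
    have "dist b b' \<le> \<delta>" "dist b b' \<le> 1" using b'(1) \<delta>_def by (auto simp: dist_commute)
    thus ?thesis using \<delta>0 by (intro mult_mono) auto
  qed
  also have "\<dots> \<le> e\<^sup>2 / 2"
  proof -
    have "\<delta> \<le> e\<^sup>2 / (10 * (dist a b + 1))" unfolding \<delta>_def by simp
    hence "\<delta> * (10 * (dist a b + 1)) \<le> e\<^sup>2" using q by (simp only: pos_le_divide_eq)
    thus ?thesis by (simp add: algebra_simps)
  qed
  also have "\<dots> < e\<^sup>2" using e by simp
  finally have "(dist (\<sigma>' t) (\<sigma> t))\<^sup>2 < e\<^sup>2" by (simp add: dist_commute)
  hence "dist (\<sigma>' t) (\<sigma> t) < e" by (rule power_less_imp_less_base[of _ 2]) (use e in auto)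
  thus "\<exists>y\<in>C. dist y (\<sigma> t) < e" using b'(3) by blast
qed

lemma closure_gconvex:
  assumes H: "hadamard_space TYPE('a::metric_space)" and S: "gconvex (S::'a set)"
  shows "gconvex (closure S)"
proof -
  have step1: "\<sigma> t \<in> closure S" if a: "a \<in> S" and b: "b \<in> closure S" and g: "geodesic a b \<sigma>" and t: "t\<in>{0..1}"
    for a b \<sigma> t
  proof (rule approx_lemma[OF H g t])
    fix e :: real assume e: "e > 0"
    then obtain b' where b': "b' \<in> S" "dist b' b < e" using b closure_approachable by blast
    obtain \<sigma>' where "geodesic a b' \<sigma>'" using had_ex[OF H] by blast
    moreover have "\<sigma>' t \<in> S" using S a b'(1) calculation t unfolding gconvex_def by blast
    ultimately show "\<exists>b'. dist b' b < e \<and> (\<exists>\<sigma>'. geodesic a b' \<sigma>' \<and> \<sigma>' t \<in> S)" using b' by blast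
  qed
  show ?thesis unfolding gconvex_def
  proof (intro ballI allI impI)
    fix a b \<sigma> t assume a: "a \<in> closure S" and b: "b \<in> closure S" and g: "geodesic a b \<sigma>" and t: "t \<in> {0..1::real}"
    have t': "1 - t \<in> {0..1}" using t by auto
    have "(\<lambda>s. \<sigma> (1-s)) (1-t) \<in> closure (closure S)"
    proof (rule approx_lemma[OF H geo_rev[OF g] t'])
      fix e :: real assume e: "e > 0"
      then obtain a' where a': "a' \<in> S" "dist a' a < e" using a closure_approachable by blast
      obtain \<rho> where \<rho>: "geodesic a' b \<rho>" using had_ex[OF H] by blast
      have "\<rho> t \<in> closure S" using step1[OF a'(1) b \<rho> t] .
      moreover have "geodesic b a' (\<lambda>s. \<rho> (1-s))" using geo_rev[OF \<rho>] .
      ultimately show "\<exists>b'. dist b' a < e \<and> (\<exists>\<sigma>'. geodesic b b' \<sigma>' \<and> \<sigma>' (1-t) \<in> closure S)"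
        using a' by force
    qed
    thus "\<sigma> t \<in> closure S" by simp
  qed
qed

lemma dist_pair_sq: "(dist (a,\<mu>) (z,s))\<^sup>2 = (dist a z)\<^sup>2 + (\<mu>-s)\<^sup>2"
  unfolding dist_Pair_Pair by (simp add: dist_real_def)

lemma prod_geo:
  fixes \<gamma> :: "real \<Rightarrow> 'a::metric_space \<times> real"
  assumes g: "geodesic (a,\<mu>) (b,\<nu>) \<gamma>" and t: "t\<in>{0..1}"
  shows "dist a (fst (\<gamma> t)) = t * dist a b \<and> dist (fst (\<gamma> t)) b = (1-t) * dist a b \<and> snd (\<gamma> t) = (1-t)*\<mu> + t*\<nu>"
proof -
  obtain z s where zs: "\<gamma> t = (z, s)" by (cases "\<gamma> t")
  define D where "D = dist (a,\<mu>) (b,\<nu>)"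
  have D2: "D\<^sup>2 = (dist a b)\<^sup>2 + ((s-\<mu>)+(\<nu>-s))\<^sup>2" unfolding D_def dist_pair_sq by (simp add: power2_commute)
  have "dist (a,\<mu>) (z,s) = t * D" using geo_dist(1)[OF g t] zs D_def by simp
  hence "(dist (a,\<mu>) (z,s))\<^sup>2 = t\<^sup>2 * D\<^sup>2" by (simp add: power_mult_distrib)
  hence e1: "(dist a z)\<^sup>2 + (s-\<mu>)\<^sup>2 = t\<^sup>2 * ((dist a b)\<^sup>2 + ((s-\<mu>)+(\<nu>-s))\<^sup>2)"
    unfolding dist_pair_sq D2 by (simp add: power2_commute)
  have "dist (z,s) (b,\<nu>) = (1-t) * D" using geo_dist(2)[OF g t] zs D_def by simp
  hence "(dist (z,s) (b,\<nu>))\<^sup>2 = (1-t)\<^sup>2 * D\<^sup>2" by (simp add: power_mult_distrib)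
  hence e2: "(dist z b)\<^sup>2 + (\<nu>-s)\<^sup>2 = (1-t)\<^sup>2 * ((dist a b)\<^sup>2 + ((s-\<mu>)+(\<nu>-s))\<^sup>2)"
    unfolding dist_pair_sq D2 by (simp add: power2_commute)
  have "dist a z = t * dist a b \<and> dist z b = (1-t) * dist a b \<and> s-\<mu> = t*((s-\<mu>)+(\<nu>-s))"
    by (rule real_key[OF _ _ _ dist_triangle _ _ e1 e2]) (use t in auto)
  thus ?thesis using zs by (simp add: algebra_simps)
qed

lemma fy_le:
  fixes y :: "nat \<Rightarrow> real"
  shows "fy n X y z \<le> ereal (\<Sum>i<n. \<bar>y i\<bar>)"
proof (cases "\<exists>i<n. X i = z")
  case True
  have fin: "finite {y i | i. i < n \<and> X i = z}" by simp
  have ne: "{y i | i. i < n \<and> X i = z} \<noteq> {}" using True by auto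
  have "Max {y i | i. i < n \<and> X i = z} \<le> (\<Sum>i<n. \<bar>y i\<bar>)"
  proof (subst Max_le_iff[OF fin ne], safe)
    fix i assume i: "i < n"
    have "y i \<le> \<bar>y i\<bar>" by simp
    also have "\<dots> \<le> (\<Sum>i<n. \<bar>y i\<bar>)" by (rule member_le_sum) (use i in auto)
    finally show "y i \<le> (\<Sum>i<n. \<bar>y i\<bar>)" .
  qed
  thus ?thesis using True unfolding fy_def by simp
qed (auto simp: fy_def)

lemma fy_ge:
  fixes y :: "nat \<Rightarrow> real"
  assumes "i < n"
  shows "ereal (y i) \<le> fy n X y (X i)"
proof -
  have fin: "finite {y j | j. j < n \<and> X j = X i}" by simp
  have "y i \<le> Max {y j | j. j < n \<and> X j = X i}" by (rule Max_ge[OF fin]) (use assms in auto)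
  thus ?thesis using assms unfolding fy_def by auto
qed

lemma gconvex_hull_gconvex: "gconvex (gconvex hull S)"
  unfolding hull_def gconvex_def by blast

theorem lemma15:
  fixes X :: "nat \<Rightarrow> 'a::metric_space" and y :: "nat \<Rightarrow> real" and n :: nat
  assumes "hadamard_space TYPE('a)"
  shows "{x. usc_concave_hull n X y x > -\<infinity>} = closure (gconvex hull (X ` {..<n}))"
proof -
  note H = assms
  define C where "C = gconvex hull (X ` {..<n})"
  define K where "K = closure C"
  define M where "M = (\<Sum>i<n. \<bar>y i\<bar>)"
  have Kconv: "gconvex K" unfolding K_def C_def by (rule closure_gconvex[OF H gconvex_hull_gconvex])
  have XC: "X ` {..<n} \<subseteq> C" unfolding C_def by (rule hull_subset)
  have XK: "X i \<in> K" if "i < n" for i using XC that closure_subset unfolding K_def by blast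
  have M0: "0 \<le> M" unfolding M_def by (simp add: sum_nonneg)
  have yM: "-M \<le> y i" if "i < n" for i
  proof -
    have "\<bar>y i\<bar> \<le> M" unfolding M_def by (rule member_le_sum) (use that in auto)
    thus ?thesis by linarith
  qed
  let ?G = "{g. usc g \<and> gconcave g \<and> (\<forall>z. g z \<ge> fy n X y z)}"
  have hull_eq: "usc_concave_hull n X y x = (INF g \<in> ?G. g x)" for x
    unfolding usc_concave_hull_def by simp
  show ?thesis
  proof (intro equalityI subsetI)
    fix x assume "x \<in> {x. usc_concave_hull n X y x > -\<infinity>}"
    hence hx: "usc_concave_hull n X y x > -\<infinity>" by simp
    show "x \<in> closure (gconvex hull (X ` {..<n}))"
    proof (rule ccontr)
      assume "x \<notin> closure (gconvex hull (X ` {..<n}))"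
      hence xK: "x \<notin> K" unfolding K_def C_def .
      define g where "g z = (if z \<in> K then ereal M else -\<infinity>)" for z
      have "usc g" unfolding usc_def
      proof (intro allI impI)
        fix z c assume zc: "g z < c"
        show "eventually (\<lambda>w. g w < c) (at z)"
        proof (cases "z \<in> K")
          case True
          hence "ereal M < c" using zc g_def by simp
          hence "\<forall>w. g w < c" unfolding g_def by auto
          thus ?thesis by simp
        next
          case False
          hence c: "-\<infinity> < c" using zc g_def by simp
          have "open (- K)" unfolding K_def by auto
          moreover have "z \<in> - K" using False by simp
          moreover have "\<forall>w\<in>- K. w \<noteq> z \<longrightarrow> g w < c" using c unfolding g_def by auto
          ultimately show ?thesis unfolding eventually_at_topological by blast
        qed
      qed
      moreover have "gconcave g" unfolding gconcave_def gconvex_def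
      proof (intro ballI allI impI)
        fix p q \<gamma> and t :: real
        assume p: "p \<in> hypo g" and q: "q \<in> hypo g" and g: "geodesic p q \<gamma>" and t: "t \<in> {0..1}"
        obtain a \<mu> where pa: "p = (a, \<mu>)" by (cases p)
        obtain b \<nu> where qb: "q = (b, \<nu>)" by (cases q)
        have a: "a \<in> K" "\<mu> \<le> M" using p pa unfolding hypo_def g_def by (auto split: if_splits)
        have b: "b \<in> K" "\<nu> \<le> M" using q qb unfolding hypo_def g_def by (auto split: if_splits)
        have pg: "dist a (fst (\<gamma> t)) = t * dist a b \<and> dist (fst (\<gamma> t)) b = (1-t) * dist a b \<and> snd (\<gamma> t) = (1-t)*\<mu> + t*\<nu>"
          using prod_geo[of a \<mu> b \<nu> \<gamma> t] g t pa qb by simp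
        obtain \<sigma> where \<sigma>: "geodesic a b \<sigma>" using had_ex[OF H] by blast
        have eq: "fst (\<gamma> t) = \<sigma> t" using had_mid[OF H \<sigma> t] pg by blast
        have "\<sigma> t \<in> K" using Kconv a(1) b(1) \<sigma> t unfolding gconvex_def by blast
        hence inK: "fst (\<gamma> t) \<in> K" using eq by simp
        have "(1-t)*\<mu> + t*\<nu> \<le> (1-t)*M + t*M"
          using t a b by (intro add_mono mult_left_mono) auto
        hence "snd (\<gamma> t) \<le> M" using pg by (simp add: algebra_simps)
        thus "\<gamma> t \<in> hypo g" using inK unfolding hypo_def g_def by (cases "\<gamma> t") auto
      qed
      moreover have "\<forall>z. g z \<ge> fy n X y z"
      proof
        fix z
        show "g z \<ge> fy n X y z"
        proof (cases "\<exists>i<n. X i = z")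
          case True
          hence "z \<in> K" using XK by blast
          thus ?thesis using fy_le[of n X y z] unfolding g_def M_def by simp
        next
          case False
          thus ?thesis unfolding fy_def by auto
        qed
      qed
      ultimately have "g \<in> ?G" by simp
      hence "usc_concave_hull n X y x \<le> g x" unfolding hull_eq by (rule INF_lower)
      also have "g x = -\<infinity>" using xK g_def by simp
      finally show False using hx by simp
    qed
  next
    fix x assume "x \<in> closure (gconvex hull (X ` {..<n}))"
    hence xK: "x \<in> closure C" unfolding C_def .
    have lb: "ereal (-M) \<le> g x" if gG: "g \<in> ?G" for g
    proof -
      define S where "S = {z. ereal (-M) \<le> g z}"
      have "gconvex S" unfolding gconvex_def
      proof (intro ballI allI impI)
        fix z1 z2 \<sigma> and t :: real
        assume z1: "z1 \<in> S" and z2: "z2 \<in> S" and \<sigma>: "geodesic z1 z2 \<sigma>" and t: "t \<in> {0..1}"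
        have dp: "dist (u, -M) (v, -M) = dist u v" for u v :: 'a
          unfolding dist_Pair_Pair by simp
        have "geodesic (z1, -M) (z2, -M) (\<lambda>s. (\<sigma> s, -M))"
          using \<sigma> unfolding geodesic_def dp by simp
        moreover have "(z1, -M) \<in> hypo g" "(z2, -M) \<in> hypo g" using z1 z2 unfolding S_def hypo_def by auto
        moreover have "gconvex (hypo g)" using gG unfolding gconcave_def by simp
        ultimately have "(\<sigma> t, -M) \<in> hypo g" using t unfolding gconvex_def by blast
        thus "\<sigma> t \<in> S" unfolding S_def hypo_def by simp
      qed
      moreover have "X ` {..<n} \<subseteq> S"
      proof
        fix z assume "z \<in> X ` {..<n}"
        then obtain i where i: "i < n" "z = X i" by auto
        have "ereal (-M) \<le> ereal (y i)" using yM[OF i(1)] by simp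
        also have "\<dots> \<le> fy n X y (X i)" by (rule fy_ge[OF i(1)])
        also have "\<dots> \<le> g (X i)" using gG by simp
        finally show "z \<in> S" unfolding S_def using i by simp
      qed
      ultimately have CS: "C \<subseteq> S" unfolding C_def by (rule hull_minimal[rotated])
      show ?thesis
      proof (rule ccontr)
        assume "\<not> ereal (-M) \<le> g x"
        hence "g x < ereal (-M)" by simp
        hence "eventually (\<lambda>z. g z < ereal (-M)) (at x)" using gG unfolding usc_def by blast
        then obtain d where d: "d > 0" "\<And>z. z \<noteq> x \<Longrightarrow> dist z x < d \<Longrightarrow> g z < ereal (-M)"
          unfolding eventually_at by auto
        obtain z where z: "z \<in> C" "dist z x < d" using xK d(1) closure_approachable by blast
        have "ereal (-M) \<le> g z" using CS z(1) unfolding S_def by blast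
        moreover have "g z < ereal (-M)"
        proof (cases "z = x")
          case True thus ?thesis using \<open>g x < ereal (-M)\<close> by simp
        next
          case False thus ?thesis using d(2) z(2) by blast
        qed
        ultimately show False by simp
      qed
    qed
    have "ereal (-M) \<le> usc_concave_hull n X y x" unfolding hull_eq by (rule INF_greatest) (rule lb)
    moreover have "-\<infinity> < ereal (-M)" by simp
    ultimately have "usc_concave_hull n X y x > -\<infinity>" by (meson less_le_trans)
    thus "x \<in> {x. usc_concave_hull n X y x > -\<infinity>}" by simp
  qed
qed
end
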